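(* For each $\eta\in(0,\eta_4)$ we have $\mathrm{Re}\,z_0,\ \mathrm{Re}\,w_1,\ \mathrm{Im}\,w_1\in(0,1)$.
   Context: For $\eta\in(0,\pi/3)$ let $a=\frac{e^{-i\eta}}{2\cos\eta}$, $c=\frac{1}{1-|a|^4}$, $z_0=ca$, $w_1=1-c|a|^2a$. Let $\Phi_4(\eta)=(1-|a|^4)\sin3\eta-|a|^3\sin2\eta+|a|^4\sin\eta$; it has a unique zero in $(\pi/4,\pi/3)$, denoted $\eta_4$. *)

theory Defs
  imports "HOL-Analysis.Analysis"
begin

definition aa :: "real \<Rightarrow> complex" where
  "aa \<eta> = cis (- \<eta>) / (2 * cos \<eta>)"

definition cc :: "real \<Rightarrow> real" where
  "cc \<eta> = 1 / (1 - cmod (aa \<eta>) ^ 4)"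

definition z0 :: "real \<Rightarrow> complex" where
  "z0 \<eta> = cc \<eta> * aa \<eta>"

definition w1 :: "real \<Rightarrow> complex" where
  "w1 \<eta> = 1 - cc \<eta> * (cmod (aa \<eta>))\<^sup>2 * aa \<eta>"

definition Phi4 :: "real \<Rightarrow> real" where
  "Phi4 \<eta> = (1 - cmod (aa \<eta>) ^ 4) * sin (3 * \<eta>) - cmod (aa \<eta>) ^ 3 * sin (2 * \<eta>)
              + cmod (aa \<eta>) ^ 4 * sin \<eta>"

definition eta4 :: real where
  "eta4 = (THE \<eta>. \<eta> \<in> {pi/4<..<pi/3} \<and> Phi4 \<eta> = 0)"

end

theory Submission imports Defs begin
lemma aa_parts: "Re (aa e) = cos e / (2 * cos e)" "Im (aa e) = - sin e / (2 * cos e)"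
  by (simp_all add: aa_def Re_divide Im_divide power2_eq_square)
lemma cmod_aa: "cos e > 0 \<Longrightarrow> cmod (aa e) = 1 / (2 * cos e)"
  by (simp add: aa_def norm_divide)
lemma alg: "(r::real) > 0 \<Longrightarrow> (1 - r^4) * (S * (1/r^2 - 1)) - r^3 * (2 * S * (1/(2*r))) + r^4 * S = S * (1 - r^2) * (1 - 2*r^4) / r^2"
  by (simp add: field_simps) (simp add: algebra_simps power2_eq_square power4_eq_xxxx power3_eq_cube eval_nat_numeral)

lemma Phi4_eq: assumes "cos e > 0" shows "Phi4 e = sin e * (1 - (1/(2*cos e))^2) * (1 - 2*(1/(2*cos e))^4) / (1/(2*cos e))^2"
proof -
  define r where "r = 1/(2*cos e)"
  have r0: "r > 0" using assms by (simp add: r_def)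
  have c: "cos e = 1/(2*r)" using assms by (simp add: r_def)
  have s2: "sin (2*e) = 2 * sin e * cos e" by (rule sin_double)
  have sc: "sin e ^ 2 = 1 - cos e ^ 2" by (simp add: sin_squared_eq)
  have s3': "sin (3*e) = sin e * (4 * cos e ^ 2 - 1)"
  proof -
    have "sin (3*e) = sin (2*e + e)" by simp
    also have "\<dots> = sin (2*e) * cos e + cos (2*e) * sin e" by (rule sin_add)
    also have "\<dots> = sin e * (4 * cos e ^ 2 - 1)"
    proof -
      have cd: "cos (2*e) = 2 * cos e ^ 2 - 1" using cos_double[of e] sc by simp
      show ?thesis unfolding sin_double cd by (simp add: power2_eq_square algebra_simps)
    qed
    finally show ?thesis .
  qed
  have "4 * cos e ^ 2 = 1/r^2" using c r0 by (simp add: power2_eq_square)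
  hence s3'': "sin (3*e) = sin e * (1/r^2 - 1)" using s3' by simp
  have "Phi4 e = (1 - r^4) * (sin e * (1/r^2 - 1)) - r^3 * (2 * sin e * (1/(2*r))) + r^4 * sin e"
    unfolding Phi4_def cmod_aa[OF assms] s3'' s2 r_def[symmetric] c[symmetric] ..
  also have "\<dots> = sin e * (1 - r^2) * (1 - 2*r^4) / r^2" by (rule alg[OF r0])
  finally show ?thesis by (simp add: r_def)
qed

lemma Phi4_zero_iff: assumes "pi/4 < e" "e < pi/3" shows "Phi4 e = 0 \<longleftrightarrow> cos e ^ 4 = 1/8"
proof -
  have c1: "cos e > 1/2" using cos_monotone_0_pi[of e "pi/3"] assms by (simp add: cos_60)
  have c2: "cos e < 1" using cos_monotone_0_pi[of 0 e] assms by simp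
  have s: "sin e > 0" using assms by (intro sin_gt_zero) auto
  have "(1/2)^2 < cos e ^2" using c1 by (intro power_strict_mono) auto
  hence r1: "(1/(2*cos e))^2 < 1" using c1 by (simp add: power_divide field_simps)
  have r1': "1 - (1/(2*cos e))^2 \<noteq> 0" using r1 by simp
  have "Phi4 e = 0 \<longleftrightarrow> 1 - 2*(1/(2*cos e))^4 = 0"
    using Phi4_eq[of e] c1 s r1' by simp
  also have "\<dots> \<longleftrightarrow> cos e ^ 4 = 1/8" using c1 by (auto simp: field_simps power_divide)
  finally show ?thesis .
qed

definition k0 :: real where "k0 = root 4 (1/8)"

lemma k0_props: "k0 ^ 4 = 1/8" "1/2 < k0" "k0 < sqrt 2 / 2" "k0 > 0"
proof -
  show k4: "k0 ^ 4 = 1/8" by (simp add: k0_def)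
  show kp: "k0 > 0" by (simp add: k0_def)
  show "1/2 < k0"
  proof (rule ccontr)
    assume "\<not> 1/2 < k0" hence "k0 \<le> 1/2" by simp
    hence "k0^4 \<le> (1/2)^4" using kp by (intro power_mono) auto
    thus False using k4 by (simp add: eval_nat_numeral)
  qed
  have "(sqrt 2 / 2) ^ 4 = (1/4::real)" by (simp add: power_divide eval_nat_numeral)
  hence "k0^4 < (sqrt 2 / 2)^4" using k4 by simp
  thus "k0 < sqrt 2 / 2" by (rule power_less_imp_less_base) simp
qed

lemma eta4_eq: "eta4 = arccos k0" "cos eta4 = k0" "pi/4 < eta4" "eta4 < pi/3"
proof -
  define e0 where "e0 = arccos k0"
  have kb: "-1 \<le> k0" "k0 \<le> 1" using k0_props(2,3) sqrt2_less_2 by linarith+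
  have ce: "cos e0 = k0" using kb by (simp add: e0_def)
  have e0b: "0 \<le> e0" "e0 \<le> pi" using kb arccos_lbound arccos_ubound by (auto simp: e0_def)
  have lo: "pi/4 < e0"
    using cos_mono_less_eq[of e0 "pi/4"] e0b ce k0_props(3) by (simp add: cos_45)
  have hi: "e0 < pi/3"
    using cos_mono_less_eq[of "pi/3" e0] e0b ce k0_props(2) by (simp add: cos_60)
  have "eta4 = e0" unfolding eta4_def
  proof (rule the_equality)
    show "e0 \<in> {pi/4<..<pi/3} \<and> Phi4 e0 = 0" using lo hi Phi4_zero_iff[of e0] ce k0_props(1) by simp
  next
    fix e assume h: "e \<in> {pi/4<..<pi/3} \<and> Phi4 e = 0"
    hence c4: "cos e ^ 4 = 1/8" using Phi4_zero_iff[of e] by auto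
    have "cos e > 0" using h by (intro cos_gt_zero_pi) auto
    hence "root 4 (1/8) = cos e" using c4 by (intro real_root_pos_unique) auto
    hence "cos e = k0" by (simp add: k0_def)
    hence "arccos (cos e) = e0" by (simp add: e0_def)
    moreover have "arccos (cos e) = e" using h pi_gt_zero by (intro arccos_cos) auto
    ultimately show "e = e0" by simp
  qed
  thus "eta4 = arccos k0" "cos eta4 = k0" "pi/4 < eta4" "eta4 < pi/3" using ce lo hi by (auto simp: e0_def)
qed

lemma final_alg:
  fixes x y :: real
  assumes x4: "x^4 > 1/8" and x1: "x \<le> 1" and x0: "x > 0" and s0: "y > 0" and sx: "y^2 + x^2 = 1"
  shows "8*x^4/(16*x^4-1) < 1" "2*x^2/(16*x^4-1) < 1" "2*x*y/(16*x^4-1) < 1"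
proof -
  have d: "16*x^4 - 1 > 1" using x4 by simp
  show "8*x^4/(16*x^4-1) < 1" using d x4 by (simp add: field_simps)
  have x2: "x^2 > (7/20)" 
  proof (rule ccontr)
    assume "\<not> x^2 > (7/20)" hence "x^2 \<le> (7/20)" by simp
    hence "(x^2)^2 \<le> (7/20)^2" using x0 by (intro power_mono) auto
    thus False using x4 by (simp add: power_mult[symmetric] eval_nat_numeral)
  qed
  have "2*x^2 < 16*x^4 - 1"
  proof -
    have "x^4 = x^2 * x^2" by (simp add: power4_eq_xxxx power2_eq_square)
    moreover have "x^2 * (16 * x^2 - 2) \<ge> (7/20) * (16 * x^2 - 2)" using x2 by (intro mult_right_mono) auto
    moreover have "x^2 * (16 * x^2 - 2) = 16 * (x^2 * x^2) - 2 * x^2" by (simp add: right_diff_distrib)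
    moreover have "(7/20) * (16 * x^2 - 2) = 28/5 * x^2 - 7/10" by (simp add: right_diff_distrib)
    ultimately show ?thesis using x2 by linarith
  qed
  thus "2*x^2/(16*x^4-1) < 1" using d by simp
  have "2*x*y < 16*x^4 - 1"
  proof -
    have yy: "y^2 = 1 - x^2" using sx by simp
    have "(2*x*y)^2 = 4*x^2*y^2" by (simp add: power_mult_distrib)
    also have "\<dots> = 4*x^2*(1-x^2)" by (simp only: yy)
    also have "\<dots> \<le> 1"
    proof -
      have "(2*x^2-1)^2 = 1 - 4*x^2*(1-x^2)" by (simp add: power2_eq_square algebra_simps)
      moreover have "0 \<le> (2*x^2-1)^2" by simp
      ultimately show ?thesis by linarith
    qed
    also have "\<dots> < (16*x^4-1)^2"
    proof -
      have "1 * 1 < (16*x^4-1) * (16*x^4-1)" using d by (intro mult_strict_mono) auto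
      thus ?thesis by (simp only: power2_eq_square)
    qed
    finally have "(2*x*y)^2 < (16*x^4-1)^2" .
    moreover have "0 \<le> 16*x^4 - 1" using d by linarith
    ultimately show ?thesis using power2_less_imp_less by blast
  qed
  thus "2*x*y/(16*x^4-1) < 1" using d by simp
qed

lemma alg1: "(x::real) > 0 \<Longrightarrow> 16*x^4 - 1 > 1 \<Longrightarrow> 1 / (1 - (1/(2*x))^4) = 16*x^4/(16*x^4-1)"
  by (simp add: power_divide divide_simps)
lemma alg2: "(x::real) > 0 \<Longrightarrow> 16*x^4 - 1 > 1 \<Longrightarrow> 1 - (16*x^4/(16*x^4-1)) * (1/(2*x))^2 * (1/2) = 1 - 2*x^2/(16*x^4-1)"
  by (simp add: power_divide divide_simps) (simp add: eval_nat_numeral algebra_simps)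
lemma alg3: "(x::real) > 0 \<Longrightarrow> 16*x^4 - 1 > 1 \<Longrightarrow> - ((16*x^4/(16*x^4-1)) * (1/(2*x))^2 * (-y/(2*x))) = 2*x*y/(16*x^4-1)"
  by (simp add: power_divide divide_simps) (simp add: eval_nat_numeral)

theorem lemma5p1:
  fixes \<eta> :: real
  assumes "0 < \<eta>" and "\<eta> < eta4"
  shows "Re (z0 \<eta>) \<in> {0<..<1} \<and> Re (w1 \<eta>) \<in> {0<..<1} \<and> Im (w1 \<eta>) \<in> {0<..<1}"
proof -
  define x where "x = cos \<eta>"
  define y where "y = sin \<eta>"
  have e3: "\<eta> < pi/3" using assms eta4_eq(4) by linarith
  have "cos eta4 < cos \<eta>" using assms eta4_eq(4) pi_gt_zero by (intro cos_monotone_0_pi) auto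
  hence xk: "k0 < x" using eta4_eq(2) by (simp add: x_def)
  have x0: "x > 0" using xk k0_props(4) by simp
  have x4: "x^4 > 1/8" using power_strict_mono[OF xk, of 4] k0_props(1,4) by simp
  have x1: "x \<le> 1" by (simp add: x_def)
  have y0: "y > 0" unfolding y_def using assms e3 pi_gt_zero by (intro sin_gt_zero) auto
  have sx: "y^2 + x^2 = 1" by (simp add: x_def y_def)
  have d: "16*x^4 - 1 > 1" using x4 by simp
  have cm: "cmod (aa \<eta>) = 1/(2*x)" using x0 cmod_aa by (simp add: x_def)
  have ccx: "cc \<eta> = 16*x^4/(16*x^4-1)" unfolding cc_def cm using alg1[OF x0 d] .
  have rea: "Re (aa \<eta>) = 1/2" "Im (aa \<eta>) = - y/(2*x)" using aa_parts[of \<eta>] x0 by (simp_all add: x_def y_def)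
  have rz: "Re (z0 \<eta>) = 8*x^4/(16*x^4-1)" unfolding z0_def using rea ccx by simp
  have "Re (w1 \<eta>) = 1 - cc \<eta> * cmod (aa \<eta>) ^ 2 * Re (aa \<eta>)" by (simp add: w1_def)
  hence rw: "Re (w1 \<eta>) = 1 - 2*x^2/(16*x^4-1)" unfolding rea ccx cm alg2[OF x0 d] .
  have "Im (w1 \<eta>) = - (cc \<eta> * cmod (aa \<eta>) ^ 2 * Im (aa \<eta>))" by (simp add: w1_def)
  hence iw: "Im (w1 \<eta>) = 2*x*y/(16*x^4-1)" unfolding rea ccx cm alg3[OF x0 d] .
  note f = final_alg[OF x4 x1 x0 y0 sx]
  have p1: "8*x^4/(16*x^4-1) > 0" "2*x^2/(16*x^4-1) > 0" "2*x*y/(16*x^4-1) > 0"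
    using d x0 y0 by auto
  show ?thesis unfolding rz rw iw using f p1 by auto
qed

end
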